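(* In the qubit–battery model with the "copy" interaction $U_{SB}$, let the battery be in the coherent state $|\alpha\rangle_B=e^{-\alpha^2/2}\sum_{n\ge0}\frac{\alpha^n}{\sqrt{n!}}|n\rangle_B$ with $\alpha>0$, whose mean energy is $\langle E\rangle=\omega\alpha^2$. Then, as $\alpha\to\infty$, $$\epsilon_C(\mathbf\Phi_{|\alpha\rangle},\mathcal V)=\frac{|V_{01}|^2}{4\alpha^2}+o(\alpha^{-2})=\frac{\omega|V_{01}|^2}{4\langle E\rangle}+o\big(\langle E\rangle^{-1}\big).$$
   Context: Qubit $S$ with $H_S=\frac\omega2(|1\rangle\langle1|-|0\rangle\langle0|)$; battery $B$ with basis $\{|n\rangle\}_{n\ge0}$ and $H_B=\omega\sum_n n|n\rangle\langle n|$. $V_S$ a qubit unitary, $V_{ij}=\langle i|V_S|j\rangle$, $\mathcal V(\cdot)=V_S\cdot V_S^\dagger$. "Copy" interaction: $U_{SB}=|0\rangle\langle0|_S\otimes|0\rangle\langle0|_B+\sum_{n\ge1}\sum_{i,j\in\{0,1\}}V_{ij}|i\rangle\langle j|_S\otimes|n-i\rangle\langle n-j|_B$. Channel $\mathbf\Phi_{|\beta\rangle}(\rho)=\mathrm{Tr}_B[U_{SB}(\rho\otimes|\beta\rangle\langle\beta|)U_{SB}^\dagger]$ with Kraus operators $K^{(n)}={}_B\langle n|U_{SB}|\beta\rangle$; Choi infidelity $\epsilon_C=1-\frac14\sum_n|\mathrm{Tr}[V_S^\dagger K^{(n)}]|^2$. *)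

theory Defs
  imports "HOL-Analysis.Analysis" "HOL-Library.Landau_Symbols"
begin

text \<open>Qubit operators are 2x2 complex matrices given by their entries
  V i j = <i|V|j>, with i, j in {0,1}.\<close>

definition qubit_unitary :: "(nat \<Rightarrow> nat \<Rightarrow> complex) \<Rightarrow> bool" where
  "qubit_unitary V \<longleftrightarrow>
     (\<forall>i<2. \<forall>k<2. (\<Sum>j<2. cnj (V j i) * V j k) = (if i = k then 1 else 0)) \<and>
     (\<forall>i<2. \<forall>k<2. (\<Sum>j<2. V i j * cnj (V k j)) = (if i = k then 1 else 0))"

text \<open>Matrix element <i|_S <n'|_B U_SB |j>_S |m>_B of the copy interaction
  U_SB = |0><0| (x) |0><0| + sum_{N>=1} sum_{i,j} V_ij |i><j| (x) |N-i><N-j|.\<close>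

definition copy_U :: "(nat \<Rightarrow> nat \<Rightarrow> complex) \<Rightarrow> nat \<Rightarrow> nat \<Rightarrow> nat \<Rightarrow> nat \<Rightarrow> complex" where
  "copy_U V i n' j m =
     (if i = 0 \<and> j = 0 \<and> n' = 0 \<and> m = 0 then 1 else 0)
     + (\<Sum>\<^sub>\<infinity>N\<in>{1..}. if n' = N - i \<and> m = N - j then V i j else 0)"

text \<open>Kraus operator K^(n) = <n|_B U_SB |beta>_B, as a qubit matrix:
  <i|K^(n)|j> = sum_m beta_m <i,n|U_SB|j,m>.\<close>

definition kraus :: "(nat \<Rightarrow> nat \<Rightarrow> complex) \<Rightarrow> (nat \<Rightarrow> complex) \<Rightarrow> nat \<Rightarrow> nat \<Rightarrow> nat \<Rightarrow> complex" where
  "kraus V \<beta> n i j = (\<Sum>\<^sub>\<infinity>m. copy_U V i n j m * \<beta> m)"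

definition tr_adj_mult :: "(nat \<Rightarrow> nat \<Rightarrow> complex) \<Rightarrow> (nat \<Rightarrow> nat \<Rightarrow> complex) \<Rightarrow> complex" where
  "tr_adj_mult V K = (\<Sum>i<2. \<Sum>j<2. cnj (V i j) * K i j)"

definition choi_infidelity :: "(nat \<Rightarrow> nat \<Rightarrow> complex) \<Rightarrow> (nat \<Rightarrow> complex) \<Rightarrow> real" where
  "choi_infidelity V \<beta> = 1 - (1/4) * (\<Sum>\<^sub>\<infinity>n. (cmod (tr_adj_mult V (kraus V \<beta> n)))\<^sup>2)"

definition coherent :: "real \<Rightarrow> nat \<Rightarrow> complex" where
  "coherent \<alpha> n = complex_of_real (exp (-(\<alpha>\<^sup>2) / 2) * \<alpha> ^ n / sqrt (fact n))"

text \<open>Mean battery energy <beta|H_B|beta> with H_B = omega sum_n n |n><n|.\<close>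

definition mean_energy :: "real \<Rightarrow> (nat \<Rightarrow> complex) \<Rightarrow> real" where
  "mean_energy \<omega> \<beta> = (\<Sum>\<^sub>\<infinity>n. \<omega> * real n * (cmod (\<beta> n))\<^sup>2)"

end

theory Submission
  imports Defs "HOL-Real_Asymp.Real_Asymp"
begin


definition PP :: "real \<Rightarrow> nat \<Rightarrow> real" where
  "PP a k = exp (-(a\<^sup>2)) * (a\<^sup>2) ^ k / fact k"
definition AA :: "real \<Rightarrow> nat \<Rightarrow> real" where
  "AA a k = exp (-(a\<^sup>2) / 2) * a ^ k / sqrt (fact k)"

lemma coherent_AA: "coherent a k = complex_of_real (AA a k)"
  by (simp add: coherent_def AA_def)

lemma AA_sq: "(AA a k)\<^sup>2 = PP a k"
proof -
  have "(exp (-(a\<^sup>2) / 2))\<^sup>2 = exp (-(a\<^sup>2))"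
    by (simp add: power2_eq_square exp_add[symmetric])
  then show ?thesis
    by (simp add: AA_def PP_def power_mult_distrib power_divide power_mult[symmetric] mult.commute)
qed

lemma AA_Suc: "AA a (Suc k) = AA a k * (a / sqrt (real k + 1))"
proof -
  have "sqrt (fact (Suc k)) = sqrt (fact k) * sqrt (real k + 1)"
    by (simp add: real_sqrt_mult[symmetric] algebra_simps)
  then show ?thesis by (simp add: AA_def field_simps)
qed

lemma PP_Suc: "PP a (Suc k) = PP a k * (a\<^sup>2 / (real k + 1))"
  by (simp add: PP_def field_simps)

lemma PP_nonneg: "PP a k \<ge> 0"
  by (simp add: PP_def)

lemma PP_0: "PP a 0 = exp (-(a\<^sup>2))" by (simp add: PP_def)

lemma sums_ext: "f sums s \<Longrightarrow> (\<And>n. f n = g n) \<Longrightarrow> s = t \<Longrightarrow> g sums t"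
proof -
  assume "f sums s" "\<And>n. f n = g n" "s = t"
  moreover have "f = g" using \<open>\<And>n. f n = g n\<close> by (rule ext)
  ultimately show ?thesis by simp
qed

lemma sums_shift0: "(\<lambda>n. f (Suc n)) sums s \<Longrightarrow> f 0 = 0 \<Longrightarrow> f sums s" for f :: "nat \<Rightarrow> real"
  using sums_Suc_iff[of f s] by simp

lemma PP_sums: "PP a sums 1"
proof -
  have "(\<lambda>n. exp (-(a\<^sup>2)) * ((a\<^sup>2)^n /\<^sub>R fact n)) sums (exp (-(a\<^sup>2)) * exp (a\<^sup>2))"
    by (intro sums_mult exp_converges)
  then show ?thesis
    by (rule sums_ext) (simp_all add: PP_def exp_add[symmetric] divide_inverse scaleR_conv_of_real)
qed

lemma M1: "(\<lambda>k. PP a k * real k) sums (a\<^sup>2)"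
proof (rule sums_shift0)
  show "(\<lambda>k. PP a (Suc k) * real (Suc k)) sums a\<^sup>2"
    using sums_mult[OF PP_sums[of a], of "a\<^sup>2"]
    by (rule sums_ext) (simp_all add: PP_Suc field_simps)
qed simp

lemma M2: "(\<lambda>k. PP a k * (real k)^2) sums (a\<^sup>2 * (a\<^sup>2 + 1))"
proof (rule sums_shift0)
  show "(\<lambda>k. PP a (Suc k) * (real (Suc k))^2) sums (a\<^sup>2 * (a\<^sup>2 + 1))"
    using sums_mult[OF sums_add[OF M1[of a] PP_sums[of a]], of "a\<^sup>2"]
    by (rule sums_ext) (simp_all add: PP_Suc field_simps power2_eq_square)
qed simp

lemma M3: "(\<lambda>k. PP a k * (real k)^3) sums (a\<^sup>2 * (a\<^sup>2 * (a\<^sup>2 + 1) + 2 * a\<^sup>2 + 1))"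
proof (rule sums_shift0)
  show "(\<lambda>k. PP a (Suc k) * (real (Suc k))^3) sums (a\<^sup>2 * (a\<^sup>2 * (a\<^sup>2 + 1) + 2 * a\<^sup>2 + 1))"
    using sums_mult[OF sums_add[OF sums_add[OF M2[of a] sums_mult[OF M1[of a], of 2]] PP_sums[of a]], of "a\<^sup>2"]
    by (rule sums_ext) (simp_all add: PP_Suc field_simps power2_eq_square power3_eq_cube)
qed simp

lemma PP_sums1: "(\<lambda>k. PP a (Suc k)) sums (1 - PP a 0)"
  using PP_sums[of a] sums_Suc_iff[of "PP a" "1 - PP a 0"] by simp

lemma PP_sums2: "(\<lambda>k. PP a (Suc (Suc k))) sums (1 - PP a 0 - PP a 1)"
  using PP_sums1[of a] sums_Suc_iff[of "\<lambda>k. PP a (Suc k)" "1 - PP a 0 - PP a 1"] by simp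

lemma PP_sums3: "(\<lambda>k. PP a (Suc (Suc (Suc k)))) sums (1 - PP a 0 - PP a 1 - PP a 2)"
  using PP_sums2[of a] sums_Suc_iff[of "\<lambda>k. PP a (Suc (Suc k))" "1 - PP a 0 - PP a 1 - PP a 2"]
  by (simp add: numeral_2_eq_2)

lemma U1: "(\<lambda>k. PP a k * (real k + 1 - a\<^sup>2)) sums 1"
  using sums_add[OF M1[of a] sums_mult[OF PP_sums[of a], of "1 - a\<^sup>2"]]
  by (rule sums_ext) (simp_all add: algebra_simps)

lemma U2: "(\<lambda>k. PP a k * (real k + 1 - a\<^sup>2)^2) sums (a\<^sup>2 + 1)"
  using sums_add[OF sums_add[OF M2[of a] sums_mult[OF M1[of a], of "2 * (1 - a\<^sup>2)"]]
        sums_mult[OF PP_sums[of a], of "(1 - a\<^sup>2)^2"]]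
  by (rule sums_ext) (simp_all add: algebra_simps power2_eq_square)

lemma U3: "(\<lambda>k. PP a k * (real k + 1 - a\<^sup>2)^3) sums (4 * a\<^sup>2 + 1)"
  using sums_add[OF sums_add[OF sums_add[OF M3[of a] sums_mult[OF M2[of a], of "3 * (1 - a\<^sup>2)"]]
        sums_mult[OF M1[of a], of "3 * (1 - a\<^sup>2)^2"]]
        sums_mult[OF PP_sums[of a], of "(1 - a\<^sup>2)^3"]]
  by (rule sums_ext) (simp_all add: algebra_simps power2_eq_square power3_eq_cube)



lemma low_s:
  fixes s :: real assumes "s > 0"
  shows "1 - (s\<^sup>2 - 1)/2 + 3*(s\<^sup>2 - 1)\<^sup>2/8 - 5*(s\<^sup>2 - 1)^3/16 \<le> 1/s"
proof -
  have id: "16 * (1 - s * (1 - (s\<^sup>2 - 1)/2 + 3*(s\<^sup>2 - 1)\<^sup>2/8 - 5*(s\<^sup>2 - 1)^3/16))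
        = (s - 1)^4 * (5* s^3 + 20* s\<^sup>2 + 29* s + 16)"
    by (simp add: field_simps power2_eq_square power3_eq_cube power4_eq_xxxx)
  have "(s - 1)^4 * (5* s^3 + 20* s\<^sup>2 + 29* s + 16) \<ge> 0"
    using assms by (intro mult_nonneg_nonneg) (auto simp: zero_le_even_power)
  then have "0 \<le> 16 * (1 - s * (1 - (s\<^sup>2 - 1)/2 + 3*(s\<^sup>2 - 1)\<^sup>2/8 - 5*(s\<^sup>2 - 1)^3/16))"
    using id by simp
  then have "s * (1 - (s\<^sup>2 - 1)/2 + 3*(s\<^sup>2 - 1)\<^sup>2/8 - 5*(s\<^sup>2 - 1)^3/16) \<le> 1"
    by (simp only: zero_le_mult_iff) simp
  then show ?thesis using assms by (simp add: field_simps)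
qed

lemma up_s:
  fixes s :: real assumes "s > 0"
  shows "1/s \<le> 5/(16* s\<^sup>2) + 11/16 - 3*(s\<^sup>2 - 1)/16 + (s\<^sup>2 - 1)\<^sup>2/16"
proof -
  have id: "16 * s^2 * (5/(16* s\<^sup>2) + 11/16 - 3*(s\<^sup>2 - 1)/16 + (s\<^sup>2 - 1)\<^sup>2/16 - 1/s)
        = (s - 1)^4 * (s\<^sup>2 + 4* s + 5)"
    using assms by (simp add: field_simps power2_eq_square power3_eq_cube power4_eq_xxxx)
  have "(s - 1)^4 * (s\<^sup>2 + 4* s + 5) \<ge> 0"
    using assms by (intro mult_nonneg_nonneg) (auto simp: zero_le_even_power)
  then have "16 * s^2 * (5/(16* s\<^sup>2) + 11/16 - 3*(s\<^sup>2 - 1)/16 + (s\<^sup>2 - 1)\<^sup>2/16 - 1/s) \<ge> 0"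
    using id by linarith
  then have "5/(16* s\<^sup>2) + 11/16 - 3*(s\<^sup>2 - 1)/16 + (s\<^sup>2 - 1)\<^sup>2/16 - 1/s \<ge> 0"
    using assms by (simp add: zero_le_mult_iff)
  then show ?thesis by simp
qed

lemma S2_up_pt:
  fixes x :: real assumes "x > 0"
  shows "1 / sqrt (x * (x + 1)) \<le> 1/(2*x) + 1/(2*(x+1))"
proof -
  have "2 * sqrt (x * (x+1)) \<le> x + (x + 1)"
  proof -
    have "0 \<le> (sqrt x - sqrt (x+1))\<^sup>2" by simp
    also have "\<dots> = x + (x+1) - 2 * sqrt (x * (x+1))"
      using assms by (simp add: power2_diff real_sqrt_mult)
    finally show ?thesis by simp
  qed
  have q: "sqrt (x * (x+1)) > 0" using assms by simp
  have "1 / sqrt (x * (x + 1)) = sqrt (x * (x+1)) / (x * (x+1))"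
    using assms q by (simp add: field_simps)
  also have "\<dots> \<le> ((x + (x+1))/2) / (x * (x+1))"
    using \<open>2 * sqrt (x * (x+1)) \<le> x + (x + 1)\<close> assms
    by (intro divide_right_mono) auto
  also have "\<dots> = x/(2*x*(x+1)) + (x+1)/(2*x*(x+1))"
    by (simp only: divide_divide_eq_left add_divide_distrib mult.assoc)
  also have "\<dots> = 1/(2*x) + 1/(2*(x+1))"
  proof -
    have "x/(2*x*(x+1)) = 1/(2*(x+1))" using assms by simp
    moreover have "(x+1)/(2*x*(x+1)) = 1/(2*x)" using assms by simp
    ultimately show ?thesis by simp
  qed
  finally show ?thesis .
qed

lemma S2_low_pt:
  fixes x :: real assumes "x \<ge> 1"
  shows "1/(x+1) + 1/(2*x*(x+1)) - 3/(x*(x+1)*(x+2)) \<le> 1 / sqrt (x * (x + 1))"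
proof -
  have poly: "(x*x + 5/2*x - 2)^2 \<le> x*(x+1)*(x+2)^2"
  proof -
    have "x*(x+1)*(x+2)^2 - (x*x + 5/2*x - 2)^2 = 23/4*x^2 + 14*x - 4"
      by (simp add: algebra_simps power2_eq_square)
    also have "\<dots> \<ge> 0"
    proof -
      have "x^2 \<ge> 1" using assms by (simp add: one_le_power)
      then show ?thesis using assms by linarith
    qed
    finally show ?thesis by simp
  qed
  have e: "x + 1/2 - 3/(x+2) = (x*x + 5/2*x - 2) / (x+2)"
    using assms by (simp add: field_simps)
  have "(x + 1/2 - 3/(x+2))^2 = (x*x + 5/2*x - 2)^2 / (x+2)^2"
    unfolding e by (simp add: power_divide)
  also have "\<dots> \<le> x * (x+1)"
    using poly assms by (simp add: pos_divide_le_eq)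
  finally have "(x + 1/2 - 3/(x+2))^2 \<le> x * (x+1)" .
  then have le: "x + 1/2 - 3/(x+2) \<le> sqrt (x * (x+1))"
    by (rule real_le_rsqrt)
  have q: "sqrt (x * (x+1)) > 0" using assms by simp
  have h: "x \<noteq> 0" "x + 1 \<noteq> 0" "x + 2 \<noteq> 0" using assms by auto
  have "(x + 1/2 - 3/(x+2)) / (x*(x+1)) = x/(x*(x+1)) + (1/2)/(x*(x+1)) - (3/(x+2))/(x*(x+1))"
    by (simp add: diff_divide_distrib add_divide_distrib)
  also have "\<dots> = 1/(x+1) + 1/(2*x*(x+1)) - 3/(x*(x+1)*(x+2))"
    using h by (simp add: mult.commute mult.left_commute)
  finally have "1/(x+1) + 1/(2*x*(x+1)) - 3/(x*(x+1)*(x+2)) = (x + 1/2 - 3/(x+2)) / (x*(x+1))"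
    by (rule sym)
  also have "\<dots> \<le> sqrt (x * (x+1)) / (x*(x+1))"
    using le assms by (intro divide_right_mono) auto
  also have "\<dots> = 1 / sqrt (x * (x + 1))"
    using assms q by (simp add: field_simps)
  finally show ?thesis .
qed



lemma sandwich:
  fixes f :: "nat \<Rightarrow> real"
  assumes "\<And>k. lo k \<le> f k" "\<And>k. f k \<le> hi k" "lo sums L" "hi sums H" "\<And>k. f k \<ge> 0"
  shows "f sums suminf f \<and> L \<le> suminf f \<and> suminf f \<le> H"
proof -
  have "summable f"
    by (rule summable_comparison_test'[of hi 0]) (use assms sums_summable in auto)
  then have fs: "f sums suminf f" by (rule summable_sums)
  show ?thesis using fs sums_le[OF assms(1) assms(3) fs] sums_le[OF assms(2) fs assms(4)] by simp
qed

definition S1 :: "real \<Rightarrow> real" where "S1 a = suminf (\<lambda>k. AA a k * AA a (Suc k))"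
definition S2 :: "real \<Rightarrow> real" where "S2 a = suminf (\<lambda>k. AA a k * AA a (Suc (Suc k)))"

lemma t1_eq: "AA a k * AA a (Suc k) = PP a k * (a / sqrt (real k + 1))"
  by (simp add: AA_Suc AA_sq[symmetric] power2_eq_square)

lemma t2_eq: "AA a k * AA a (Suc (Suc k)) = PP a k * (a\<^sup>2 / sqrt ((real k + 1) * (real k + 1 + 1)))"
  by (simp add: AA_Suc AA_sq[symmetric] power2_eq_square real_sqrt_mult add.commute)

lemma AA_nonneg: "a > 0 \<Longrightarrow> AA a k \<ge> 0"
  by (simp add: AA_def)

lemma S1_bounds:
  assumes a: "a \<ge> 1"
  shows "(\<lambda>k. AA a k * AA a (Suc k)) sums S1 a \<and> \<bar>S1 a - (1 - 1/(8*a\<^sup>2))\<bar> \<le> 2/a^4"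
proof -
  have a0: "a > 0" using a by simp
  define lo where "lo k = PP a k * (1 - ((real k + 1 - a\<^sup>2)/a\<^sup>2)/2 + 3*((real k + 1 - a\<^sup>2)/a\<^sup>2)\<^sup>2/8
                      - 5*((real k + 1 - a\<^sup>2)/a\<^sup>2)^3/16)" for k
  define hi where "hi k = PP a k * (5 * (a\<^sup>2/(real k + 1))/16 + 11/16 - 3*((real k + 1 - a\<^sup>2)/a\<^sup>2)/16
                      + ((real k + 1 - a\<^sup>2)/a\<^sup>2)\<^sup>2/16)" for k
  have pt: "lo k \<le> AA a k * AA a (Suc k) \<and> AA a k * AA a (Suc k) \<le> hi k" for k
  proof -
    define s where "s = sqrt (real k + 1) / a"
    have s0: "s > 0" using a0 by (simp add: s_def)
    have s2: "s\<^sup>2 - 1 = (real k + 1 - a\<^sup>2)/a\<^sup>2" using a0 by (simp add: s_def power_divide field_simps)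
    have s2': "1 / s\<^sup>2 = a\<^sup>2/(real k + 1)" using a0 by (simp add: s_def power_divide)
    have isq: "1 / s = a / sqrt (real k + 1)" by (simp add: s_def)
    have "lo k = PP a k * (1 - (s\<^sup>2 - 1)/2 + 3*(s\<^sup>2 - 1)\<^sup>2/8 - 5*(s\<^sup>2 - 1)^3/16)"
      by (simp add: lo_def s2)
    also have "\<dots> \<le> PP a k * (1/s)"
      by (intro mult_left_mono low_s s0 PP_nonneg)
    finally have 1: "lo k \<le> AA a k * AA a (Suc k)" by (simp add: t1_eq isq)
    have "PP a k * (1/s) \<le> PP a k * (5/(16* s\<^sup>2) + 11/16 - 3*(s\<^sup>2 - 1)/16 + (s\<^sup>2 - 1)\<^sup>2/16)"
      by (intro mult_left_mono up_s s0 PP_nonneg)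
    also have "\<dots> = hi k"
    proof -
      have f: "5/(16* s\<^sup>2) = 5 * (a\<^sup>2/(real k + 1))/16" unfolding s2'[symmetric] by simp
      show ?thesis by (simp only: hi_def s2 f)
    qed
    finally have 2: "AA a k * AA a (Suc k) \<le> hi k" by (simp add: t1_eq isq)
    show ?thesis using 1 2 by simp
  qed
  have los: "lo sums (1 - 1/(2*a\<^sup>2) + 3*(a\<^sup>2+1)/(8*(a\<^sup>2)\<^sup>2) - 5*(4*a\<^sup>2+1)/(16*(a\<^sup>2)^3))"
    using sums_diff[OF sums_add[OF sums_diff[OF PP_sums[of a] sums_mult[OF U1[of a], of "1/(2*a\<^sup>2)"]]
          sums_mult[OF U2[of a], of "3/(8*(a\<^sup>2)\<^sup>2)"]] sums_mult[OF U3[of a], of "5/(16*(a\<^sup>2)^3)"]]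
    by (rule sums_ext) (simp_all add: lo_def power_divide field_simps)
  have his: "hi sums (5/16 * (1 - PP a 0) + 11/16 - 3/(16*a\<^sup>2) + (a\<^sup>2+1)/(16*(a\<^sup>2)\<^sup>2))"
    using sums_add[OF sums_diff[OF sums_add[OF sums_mult[OF PP_sums1[of a], of "5/16"] sums_mult[OF PP_sums[of a], of "11/16"]]
          sums_mult[OF U1[of a], of "3/(16*a\<^sup>2)"]] sums_mult[OF U2[of a], of "1/(16*(a\<^sup>2)\<^sup>2)"]]
    by (rule sums_ext) (simp_all add: hi_def PP_Suc power_divide field_simps)
  have nn: "AA a k * AA a (Suc k) \<ge> 0" for k using AA_nonneg[OF a0] by simp
  from sandwich[OF conjunct1[OF pt] conjunct2[OF pt] los his nn]
  have r: "(\<lambda>k. AA a k * AA a (Suc k)) sums S1 a"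
     "1 - 1/(2*a\<^sup>2) + 3*(a\<^sup>2+1)/(8*(a\<^sup>2)\<^sup>2) - 5*(4*a\<^sup>2+1)/(16*(a\<^sup>2)^3) \<le> S1 a"
     "S1 a \<le> 5/16 * (1 - PP a 0) + 11/16 - 3/(16*a\<^sup>2) + (a\<^sup>2+1)/(16*(a\<^sup>2)\<^sup>2)"
    by (simp_all add: S1_def)
  have l1: "a\<^sup>2 \<ge> 1" using a by (simp add: one_le_power)
  have e1: "1 - 1/(2*a\<^sup>2) + 3*(a\<^sup>2+1)/(8*(a\<^sup>2)\<^sup>2) - 5*(4*a\<^sup>2+1)/(16*(a\<^sup>2)^3)
      = 1 - 1/(8*a\<^sup>2) - (7/8 + 5/(16*a\<^sup>2))/(a\<^sup>2)\<^sup>2"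
    using a0 by (simp add: field_simps)
  have e2: "5/16 * (1 - PP a 0) + 11/16 - 3/(16*a\<^sup>2) + (a\<^sup>2+1)/(16*(a\<^sup>2)\<^sup>2)
      = 1 - 1/(8*a\<^sup>2) + (1/16)/(a\<^sup>2)\<^sup>2 - 5/16 * PP a 0"
    using a0 by (simp add: field_simps)
  have "5/(16*a\<^sup>2) \<le> 5/16" using l1 by (simp add: divide_le_eq)
  then have "(7/8 + 5/(16*a\<^sup>2))/(a\<^sup>2)\<^sup>2 \<le> 2/(a\<^sup>2)\<^sup>2"
    using a0 by (intro divide_right_mono) auto
  moreover have "(1/16)/(a\<^sup>2)\<^sup>2 \<le> 2/(a\<^sup>2)\<^sup>2" using a0 by (intro divide_right_mono) auto
  moreover have "PP a 0 \<ge> 0" by (rule PP_nonneg)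
  moreover have "(a\<^sup>2)\<^sup>2 = a^4" by simp
  ultimately show ?thesis using r e1 e2 by (simp add: abs_le_iff)
qed

lemma gen3: "b \<noteq> 0 \<Longrightarrow> c \<noteq> 0 \<Longrightarrow> 3 * (P * (b / c)) / b\<^sup>2 = 3 * (P / b) / (c::real)"
  by (simp add: field_simps power2_eq_square)

lemma S2_bounds:
  assumes a: "a \<ge> 1"
  shows "(\<lambda>k. AA a k * AA a (Suc (Suc k))) sums S2 a \<and>
         1 - 1/(2*a\<^sup>2) - 3/a^4 - exp (-(a\<^sup>2)) \<le> S2 a \<and> S2 a \<le> 1 - 1/(2*a\<^sup>2)"
proof -
  have a0: "a > 0" using a by simp
  define lo where "lo k = PP a (Suc k) - PP a (Suc (Suc k))/a\<^sup>2 + PP a (Suc (Suc k))/(2*a\<^sup>2)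
     - 3 * PP a (Suc (Suc (Suc k)))/(a\<^sup>2)\<^sup>2" for k
  define hi where "hi k = PP a (Suc k)/2 + (PP a (Suc k) - PP a (Suc (Suc k))/a\<^sup>2)/2" for k
  have pt: "lo k \<le> AA a k * AA a (Suc (Suc k)) \<and> AA a k * AA a (Suc (Suc k)) \<le> hi k" for k
  proof -
    define x where "x = real k + 1"
    have x1: "x \<ge> 1" by (simp add: x_def)
    have t: "AA a k * AA a (Suc (Suc k)) = PP a k * a\<^sup>2 * (1 / sqrt (x * (x + 1)))"
      by (simp add: t2_eq x_def)
    have hx: "x \<noteq> 0" "x + 1 \<noteq> 0" "x + 2 \<noteq> 0" "a \<noteq> 0" using x1 a0 by auto
    have P1: "PP a (Suc k) = PP a k * a\<^sup>2 / x" by (simp add: PP_Suc x_def)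
    have P2: "PP a (Suc (Suc k)) = PP a k * a\<^sup>2 / x * a\<^sup>2 / (x + 1)"
      by (simp add: PP_Suc x_def add.commute)
    have P3: "PP a (Suc (Suc (Suc k))) = PP a k * a\<^sup>2 / x * a\<^sup>2 / (x + 1) * a\<^sup>2 / (x + 2)"
      by (simp add: PP_Suc x_def add.commute add.left_commute)
    define Q where "Q = PP a k * a\<^sup>2"
      have q1: "PP a (Suc k) = Q / x" unfolding P1 Q_def by simp
      have q2: "PP a (Suc (Suc k)) / a\<^sup>2 = Q/(x*(x+1))" unfolding P2 Q_def
      proof -
        have g1: "x * x > 0" "x * a\<^sup>2 > 0" using x1 a0 by auto
        have g2: "x * (x * a\<^sup>2) > 0" using g1 x1 by simp
        have "x + x * x \<noteq> 0" "x * a\<^sup>2 + x * (x * a\<^sup>2) \<noteq> 0" using g1 g2 x1 by linarith+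
        then show "PP a k * a\<^sup>2 / x * a\<^sup>2 / (x + 1) / a\<^sup>2 = PP a k * a\<^sup>2 / (x * (x + 1))"
          using hx by (simp add: field_simps)
      qed
      have q3: "PP a (Suc (Suc k)) / (2*a\<^sup>2) = Q/(2*x*(x+1))"
      proof -
        have "PP a (Suc (Suc k)) / (2*a\<^sup>2) = (PP a (Suc (Suc k)) / a\<^sup>2) / 2" by simp
        then show ?thesis unfolding q2 by (simp add: mult.assoc)
      qed
      have P3': "PP a (Suc (Suc (Suc k))) = PP a (Suc (Suc k)) * (a\<^sup>2 / (x + 2))"
        by (simp add: PP_Suc x_def add.commute add.left_commute)
      have q4: "3 * PP a (Suc (Suc (Suc k))) / (a\<^sup>2)\<^sup>2 = 3*Q/(x*(x+1)*(x+2))"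
      proof -
        have "3 * PP a (Suc (Suc (Suc k))) / (a\<^sup>2)\<^sup>2 = 3 * (PP a (Suc (Suc k)) / a\<^sup>2) / (x + 2)"
        proof -
          have gen: "3 * (P * (b / c)) / b\<^sup>2 = 3 * (P / b) / c" if "b \<noteq> 0" "c \<noteq> 0" for P b c :: real
            using that by (simp add: field_simps power2_eq_square)
          show ?thesis unfolding P3' by (rule gen) (use hx in auto)
        qed
        then show ?thesis unfolding q2 by (simp add: mult.assoc)
      qed
      have key: "Q/x - Q/(x*(x+1)) = Q/(x+1)"
      proof -
        have g: "Q/x - Q/(x*y) = Q*(y-1)/(x*y)" if "x \<noteq> 0" "y \<noteq> 0" for y
          using that by (simp add: field_simps)
        have "Q/x - Q/(x*(x+1)) = Q*((x+1)-1)/(x*(x+1))" by (rule g) (use hx in auto)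
        also have "\<dots> = Q/(x+1)" using hx by simp
        finally show ?thesis .
      qed
    have lo_eq: "lo k = PP a k * a\<^sup>2 * (1/(x+1) + 1/(2*x*(x+1)) - 3/(x*(x+1)*(x+2)))"
    proof -
      have "lo k = Q/(x+1) + Q/(2*x*(x+1)) - 3*Q/(x*(x+1)*(x+2))"
        unfolding lo_def q1 q2 q3 q4 using key by simp
      also have "\<dots> = Q * (1/(x+1) + 1/(2*x*(x+1)) - 3/(x*(x+1)*(x+2)))"
        by (simp add: algebra_simps)
      finally show ?thesis by (simp add: Q_def)
    qed
    have hi_eq: "hi k = PP a k * a\<^sup>2 * (1/(2*x) + 1/(2*(x+1)))"
    proof -
      have "hi k = (Q/x)/2 + (Q/(x+1))/2" unfolding hi_def q1 q2 key by simp
      also have "\<dots> = Q * (1/(2*x) + 1/(2*(x+1)))" by (simp add: algebra_simps)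
      finally show ?thesis by (simp add: Q_def)
    qed
    have nn: "PP a k * a\<^sup>2 \<ge> 0" using PP_nonneg by simp
    show ?thesis unfolding t lo_eq hi_eq
      using mult_left_mono[OF S2_low_pt[OF x1] nn] mult_left_mono[OF S2_up_pt nn] x1 by simp
  qed
  have los: "lo sums ((1 - PP a 0) - (1 - PP a 0 - PP a 1)/a\<^sup>2 + (1 - PP a 0 - PP a 1)/(2*a\<^sup>2)
       - 3 * (1 - PP a 0 - PP a 1 - PP a 2)/(a\<^sup>2)\<^sup>2)"
    unfolding lo_def
    by (intro sums_diff sums_add sums_divide PP_sums1 PP_sums2 PP_sums3 sums_mult)
  have his: "hi sums ((1 - PP a 0)/2 + ((1 - PP a 0) - (1 - PP a 0 - PP a 1)/a\<^sup>2)/2)"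
    unfolding hi_def
    by (intro sums_diff sums_add sums_divide PP_sums1 PP_sums2)
  have nn: "AA a k * AA a (Suc (Suc k)) \<ge> 0" for k using AA_nonneg[OF a0] by simp
  from sandwich[OF conjunct1[OF pt] conjunct2[OF pt] los his nn]
  have r: "(\<lambda>k. AA a k * AA a (Suc (Suc k))) sums S2 a"
     "(1 - PP a 0) - (1 - PP a 0 - PP a 1)/a\<^sup>2 + (1 - PP a 0 - PP a 1)/(2*a\<^sup>2)
       - 3 * (1 - PP a 0 - PP a 1 - PP a 2)/(a\<^sup>2)\<^sup>2 \<le> S2 a"
     "S2 a \<le> (1 - PP a 0)/2 + ((1 - PP a 0) - (1 - PP a 0 - PP a 1)/a\<^sup>2)/2"
    by (simp_all add: S2_def)
  have l1: "a\<^sup>2 \<ge> 1" using a by (simp add: one_le_power)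
  have p0: "PP a 0 = exp (-(a\<^sup>2))" by (simp add: PP_def)
  have p1: "PP a 1 = exp (-(a\<^sup>2)) * a\<^sup>2" by (simp add: PP_def)
  have p2: "PP a 2 \<ge> 0" by (rule PP_nonneg)
  have ex: "exp (-(a\<^sup>2)) > 0" by simp
  define e where "e = exp (-(a\<^sup>2))"
  define l where "l = a\<^sup>2"
  have l1': "l \<ge> 1" using l1 by (simp add: l_def)
  have up: "(1 - PP a 0)/2 + ((1 - PP a 0) - (1 - PP a 0 - PP a 1)/a\<^sup>2)/2 \<le> 1 - 1/(2*a\<^sup>2)"
  proof -
    have "(1 - PP a 0)/2 + ((1 - PP a 0) - (1 - PP a 0 - PP a 1)/a\<^sup>2)/2
        = 1 - 1/(2*l) - e/2 + e/(2*l)"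
      unfolding p0 p1 unfolding e_def[symmetric] unfolding l_def[symmetric] using l1' by (simp add: field_simps)
    also have "\<dots> \<le> 1 - 1/(2*l)"
    proof -
      have "e/(2*l) \<le> e/2" using l1' ex unfolding e_def by (intro divide_left_mono) auto
      then show ?thesis by simp
    qed
    finally show ?thesis by (simp add: l_def)
  qed
  have low: "1 - 1/(2*a\<^sup>2) - 3/a^4 - exp (-(a\<^sup>2)) \<le>
       (1 - PP a 0) - (1 - PP a 0 - PP a 1)/a\<^sup>2 + (1 - PP a 0 - PP a 1)/(2*a\<^sup>2)
       - 3 * (1 - PP a 0 - PP a 1 - PP a 2)/(a\<^sup>2)\<^sup>2"
  proof -
    have eq: "(1 - PP a 0) - (1 - PP a 0 - PP a 1)/a\<^sup>2 + (1 - PP a 0 - PP a 1)/(2*a\<^sup>2)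
       - 3 * (1 - PP a 0 - PP a 1 - PP a 2)/(a\<^sup>2)\<^sup>2
       = 1 - e - (1 - e - e*l)/(2*l) - 3 * (1 - e - e*l - PP a 2)/l\<^sup>2"
      unfolding p0 p1 unfolding e_def[symmetric] unfolding l_def[symmetric] using l1' by (simp add: field_simps)
    have e0: "e > 0" by (simp add: e_def)
    have el: "e * l \<ge> 0" using e0 l1' by simp
    have "(1 - e - e*l)/(2*l) \<le> 1/(2*l)"
      by (intro divide_right_mono) (use l1' e0 el in linarith)+
    moreover have "3 * (1 - e - e*l - PP a 2)/l\<^sup>2 \<le> 3/l\<^sup>2"
    proof -
      have "1 - e - e*l - PP a 2 \<le> 1" using e0 el p2 by linarith
      then have "3 * (1 - e - e*l - PP a 2) \<le> 3" using mult_left_mono[of _ 1 3] by fastforce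
      then show ?thesis by (intro divide_right_mono) simp_all
    qed
    ultimately have "1 - 1/(2*l) - 3/l\<^sup>2 - e \<le> 1 - e - (1 - e - e*l)/(2*l) - 3 * (1 - e - e*l - PP a 2)/l\<^sup>2"
      by linarith
    moreover have "l\<^sup>2 = a^4" by (simp add: l_def)
    ultimately show ?thesis unfolding eq by (simp add: l_def e_def)
  qed
  show ?thesis using r up low by linarith
qed



lemma infsum_single:
  fixes f :: "'a \<Rightarrow> 'b::{comm_monoid_add,t2_space}"
  assumes "\<And>x. x \<in> A \<Longrightarrow> x \<noteq> a \<Longrightarrow> f x = 0"
  shows "infsum f A = (if a \<in> A then f a else 0)"
proof -
  have "infsum f A = infsum f (A \<inter> {a})" by (rule infsum_cong_neutral) (use assms in auto)
  then show ?thesis by (cases "a \<in> A") auto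
qed

lemma copy_U_00: "copy_U V 0 n 0 m = (if m = n then (if n = 0 then 1 else V 0 0) else 0)"
  unfolding copy_U_def by (subst infsum_single[where a = n]) auto

lemma copy_U_01: "copy_U V 0 n 1 m = (if m = n - 1 then (if n = 0 then 0 else V 0 1) else 0)"
  unfolding copy_U_def by (subst infsum_single[where a = n]) auto

lemma copy_U_10: "copy_U V 1 n 0 m = (if m = Suc n then V 1 0 else 0)"
  unfolding copy_U_def by (subst infsum_single[where a = "Suc n"]) auto

lemma copy_U_11: "copy_U V 1 n 1 m = (if m = n then V 1 1 else 0)"
  unfolding copy_U_def by (subst infsum_single[where a = "Suc n"]) auto

lemma kraus_00: "kraus V \<beta> n 0 0 = (if n = 0 then 1 else V 0 0) * \<beta> n"
  unfolding kraus_def copy_U_00 by (subst infsum_single[where a = n]) auto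

lemma kraus_01: "kraus V \<beta> n 0 1 = (if n = 0 then 0 else V 0 1) * \<beta> (n - 1)"
  unfolding kraus_def copy_U_01 by (subst infsum_single[where a = "n - 1"]) auto

lemma kraus_10: "kraus V \<beta> n 1 0 = V 1 0 * \<beta> (Suc n)"
  unfolding kraus_def copy_U_10 by (subst infsum_single[where a = "Suc n"]) auto

lemma kraus_11: "kraus V \<beta> n 1 1 = V 1 1 * \<beta> n"
  unfolding kraus_def copy_U_11 by (subst infsum_single[where a = n]) auto

lemma tr_kraus: "tr_adj_mult V (kraus V \<beta> n) =
   cnj (V 0 0) * ((if n = 0 then 1 else V 0 0) * \<beta> n)
 + cnj (V 0 1) * ((if n = 0 then 0 else V 0 1) * \<beta> (n - 1))
 + cnj (V 1 0) * (V 1 0 * \<beta> (Suc n)) + cnj (V 1 1) * (V 1 1 * \<beta> n)"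
  by (simp add: tr_adj_mult_def numeral_2_eq_2 kraus_00 kraus_01[unfolded One_nat_def]
      kraus_10[unfolded One_nat_def] kraus_11[unfolded One_nat_def])

lemma cnj_mult_self: "cnj z * z = complex_of_real ((cmod z)\<^sup>2)"
  by (metis complex_norm_square mult.commute)

lemma unitary_norms:
  assumes "qubit_unitary V"
  shows "(cmod (V 1 0))\<^sup>2 = (cmod (V 0 1))\<^sup>2" "(cmod (V 0 0))\<^sup>2 = 1 - (cmod (V 0 1))\<^sup>2"
        "(cmod (V 1 1))\<^sup>2 = 1 - (cmod (V 0 1))\<^sup>2"
proof -
  from assms have c00: "(\<Sum>j<2. cnj (V j 0) * V j 0) = 1" and c11: "(\<Sum>j<2. cnj (V j 1) * V j 1) = 1"
     and r00: "(\<Sum>j<2. V 0 j * cnj (V 0 j)) = 1"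
    unfolding qubit_unitary_def by auto
  have "complex_of_real ((cmod (V 0 0))\<^sup>2 + (cmod (V 1 0))\<^sup>2) = 1"
    using c00 by (simp add: numeral_2_eq_2 cnj_mult_self)
  then have A: "(cmod (V 0 0))\<^sup>2 + (cmod (V 1 0))\<^sup>2 = 1" using of_real_eq_1_iff by blast
  have "complex_of_real ((cmod (V 0 1))\<^sup>2 + (cmod (V 1 1))\<^sup>2) = 1"
    using c11 by (simp add: numeral_2_eq_2 cnj_mult_self)
  then have B: "(cmod (V 0 1))\<^sup>2 + (cmod (V 1 1))\<^sup>2 = 1" using of_real_eq_1_iff by blast
  have r00': "V 0 0 * cnj (V 0 0) + V 0 1 * cnj (V 0 1) = 1" using r00 by (simp add: numeral_2_eq_2)
  have "complex_of_real ((cmod (V 0 0))\<^sup>2 + (cmod (V 0 1))\<^sup>2) = 1"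
    by (simp only: of_real_add complex_norm_square r00')
  then have C: "(cmod (V 0 0))\<^sup>2 + (cmod (V 0 1))\<^sup>2 = 1" using of_real_eq_1_iff by blast
  show "(cmod (V 1 0))\<^sup>2 = (cmod (V 0 1))\<^sup>2" "(cmod (V 0 0))\<^sup>2 = 1 - (cmod (V 0 1))\<^sup>2"
        "(cmod (V 1 1))\<^sup>2 = 1 - (cmod (V 0 1))\<^sup>2" using A B C by linarith+
qed



definition BB :: "real \<Rightarrow> nat \<Rightarrow> real" where
  "BB a n = (if n = 0 then 0 else AA a (n - 1))"

definition RR :: "real \<Rightarrow> real \<Rightarrow> nat \<Rightarrow> real" where
  "RR a p n = 2 * (1 - p) * AA a n + p * (BB a n + AA a (Suc n))"

lemma T_Suc:
  assumes "qubit_unitary V"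
  shows "tr_adj_mult V (kraus V (coherent a) (Suc m)) = complex_of_real (RR a ((cmod (V 0 1))\<^sup>2) (Suc m))"
proof -
  have "tr_adj_mult V (kraus V (coherent a) (Suc m)) =
     (cnj (V 0 0) * V 0 0) * coherent a (Suc m) + (cnj (V 0 1) * V 0 1) * coherent a m
     + (cnj (V 1 0) * V 1 0) * coherent a (Suc (Suc m)) + (cnj (V 1 1) * V 1 1) * coherent a (Suc m)"
    by (simp add: tr_kraus mult.assoc)
  also have "\<dots> = complex_of_real ((cmod (V 0 0))\<^sup>2 * AA a (Suc m) + (cmod (V 0 1))\<^sup>2 * AA a m
     + (cmod (V 1 0))\<^sup>2 * AA a (Suc (Suc m)) + (cmod (V 1 1))\<^sup>2 * AA a (Suc m))"
    unfolding cnj_mult_self coherent_AA of_real_add of_real_mult ..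
  also have "\<dots> = complex_of_real (RR a ((cmod (V 0 1))\<^sup>2) (Suc m))"
  proof -
    have r: "(cmod (V 0 0))\<^sup>2 * AA a (Suc m) + (cmod (V 0 1))\<^sup>2 * AA a m
     + (cmod (V 1 0))\<^sup>2 * AA a (Suc (Suc m)) + (cmod (V 1 1))\<^sup>2 * AA a (Suc m) = RR a ((cmod (V 0 1))\<^sup>2) (Suc m)"
      unfolding unitary_norms[OF assms] by (simp add: RR_def BB_def algebra_simps)
    show ?thesis by (simp only: r)
  qed
  finally show ?thesis .
qed

lemma T_0:
  assumes "qubit_unitary V"
  shows "tr_adj_mult V (kraus V (coherent a) 0) = cnj (V 0 0) * complex_of_real (AA a 0)
     + complex_of_real ((cmod (V 0 1))\<^sup>2 * AA a 1 + (1 - (cmod (V 0 1))\<^sup>2) * AA a 0)"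
proof -
  have "tr_adj_mult V (kraus V (coherent a) 0) =
     cnj (V 0 0) * coherent a 0 + (cnj (V 1 0) * V 1 0) * coherent a 1 + (cnj (V 1 1) * V 1 1) * coherent a 0"
    by (simp add: tr_kraus mult.assoc)
  also have "\<dots> = cnj (V 0 0) * complex_of_real (AA a 0) + complex_of_real ((cmod (V 1 0))\<^sup>2 * AA a 1
     + (cmod (V 1 1))\<^sup>2 * AA a 0)"
    unfolding cnj_mult_self coherent_AA of_real_add of_real_mult by (simp add: add.assoc)
  also have "\<dots> = cnj (V 0 0) * complex_of_real (AA a 0)
     + complex_of_real ((cmod (V 0 1))\<^sup>2 * AA a 1 + (1 - (cmod (V 0 1))\<^sup>2) * AA a 0)"
    using unitary_norms[OF assms] by simp
  finally show ?thesis .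
qed

lemma RR_sq_sums:
  assumes a: "a \<ge> 1"
  shows "(\<lambda>n. (RR a p n)\<^sup>2) sums (4*(1-p)\<^sup>2 + p\<^sup>2 * (1 + 2 * S2 a + (1 - PP a 0)) + 4*p*(1-p)*(2 * S1 a))"
proof -
  have a0: "a > 0" using a by simp
  have X1: "(\<lambda>n. (AA a n)\<^sup>2) sums 1" using PP_sums[of a] by (simp add: AA_sq)
  have X2: "(\<lambda>n. (BB a n)\<^sup>2) sums 1"
    by (rule sums_shift0) (simp_all add: BB_def AA_sq PP_sums)
  have X3: "(\<lambda>n. (AA a (Suc n))\<^sup>2) sums (1 - PP a 0)" using PP_sums1[of a] by (simp add: AA_sq)
  have X4: "(\<lambda>n. BB a n * AA a (Suc n)) sums S2 a"
    by (rule sums_shift0) (use S2_bounds[OF a] in \<open>simp_all add: BB_def\<close>)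
  have X5: "(\<lambda>n. AA a n * BB a n) sums S1 a"
    by (rule sums_shift0) (use S1_bounds[OF a] in \<open>simp_all add: BB_def mult.commute\<close>)
  have X6: "(\<lambda>n. AA a n * AA a (Suc n)) sums S1 a" using S1_bounds[OF a] by simp
  have "(\<lambda>n. 4*(1-p)\<^sup>2 * (AA a n)\<^sup>2 + p\<^sup>2 * ((BB a n)\<^sup>2 + 2 * (BB a n * AA a (Suc n)) + (AA a (Suc n))\<^sup>2)
      + 4*p*(1-p) * (AA a n * BB a n + AA a n * AA a (Suc n)))
     sums (4*(1-p)\<^sup>2 * 1 + p\<^sup>2 * (1 + 2 * S2 a + (1 - PP a 0)) + 4*p*(1-p)*(S1 a + S1 a))"
    by (intro sums_add sums_mult X1 X2 X3 X4 X5 X6)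
  then show ?thesis
    by (rule sums_ext) (simp_all add: RR_def power2_eq_square algebra_simps)
qed



lemma choi_eq:
  assumes U: "qubit_unitary V" and a: "a \<ge> 1"
  defines "p \<equiv> (cmod (V 0 1))\<^sup>2"
  shows "choi_infidelity V (coherent a) = 1 - (1/4) * ((4*(1-p)\<^sup>2 + p\<^sup>2 * (1 + 2 * S2 a + (1 - PP a 0)) + 4*p*(1-p)*(2 * S1 a))
     - (RR a p 0)\<^sup>2 + (cmod (tr_adj_mult V (kraus V (coherent a) 0)))\<^sup>2)"
proof -
  define SR where "SR = 4*(1-p)\<^sup>2 + p\<^sup>2 * (1 + 2 * S2 a + (1 - PP a 0)) + 4*p*(1-p)*(2 * S1 a)"
  define g where "g n = (cmod (tr_adj_mult V (kraus V (coherent a) n)))\<^sup>2" for n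
  have gS: "g (Suc n) = (RR a p (Suc n))\<^sup>2" for n
    unfolding g_def T_Suc[OF U] p_def by simp
  have "(\<lambda>n. (RR a p n)\<^sup>2) sums SR" unfolding SR_def by (rule RR_sq_sums[OF a])
  then have "(\<lambda>n. (RR a p (Suc n))\<^sup>2) sums (SR - (RR a p 0)\<^sup>2)"
    using sums_Suc_iff[of "\<lambda>n. (RR a p n)\<^sup>2" "SR - (RR a p 0)\<^sup>2"] by simp
  then have "(\<lambda>n. g (Suc n)) sums (SR - (RR a p 0)\<^sup>2)" by (simp add: gS)
  then have gs: "g sums (SR - (RR a p 0)\<^sup>2 + g 0)" by (simp add: sums_Suc_iff)
  have "(g has_sum (SR - (RR a p 0)\<^sup>2 + g 0)) UNIV"
    by (rule sums_nonneg_imp_has_sum[OF gs]) (simp add: g_def)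
  then have "infsum g UNIV = SR - (RR a p 0)\<^sup>2 + g 0" by (rule infsumI)
  then show ?thesis
    unfolding choi_infidelity_def by (simp add: g_def[abs_def] SR_def)
qed



lemma ident_gen:
  fixes l p e1 e2 E R g :: real
  assumes "l \<noteq> 0"
  shows "1 - (1/4) * ((4*(1-p)\<^sup>2 + p\<^sup>2 * (1 + 2 * (1 - 1/(2*l) - e2) + (1 - E)) + 4*p*(1-p)*(2 * (1 - 1/(8*l) - e1)))
     - R\<^sup>2 + g) - p / (4 * l) = p\<^sup>2*e2/2 + 2*p*(1-p)*e1 + p\<^sup>2*E/4 + (R\<^sup>2 - g)/4"
proof -
  have "1/(2*l) = (1/l)/2" "1/(8*l) = (1/l)/8" "p/(4*l) = p*(1/l)/4" by simp_all
  then show ?thesis by (simp only:) (simp add: field_simps power2_eq_square)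
qed

lemma main_bound:
  assumes U: "qubit_unitary V" and a: "a \<ge> 1"
  shows "\<bar>choi_infidelity V (coherent a) - (cmod (V 0 1))\<^sup>2 / (4 * a\<^sup>2)\<bar> \<le> 3/a^4 + exp (-(a\<^sup>2)) * (1 + (2+a)\<^sup>2)"
proof -
  have a0: "a > 0" using a by simp
  define p where "p = (cmod (V 0 1))\<^sup>2"
  define E where "E = exp (-(a\<^sup>2))"
  define e1 where "e1 = 1 - 1/(8*a\<^sup>2) - S1 a"
  define e2 where "e2 = 1 - 1/(2*a\<^sup>2) - S2 a"
  define R0 where "R0 = RR a p 0"
  define T0 where "T0 = tr_adj_mult V (kraus V (coherent a) 0)"
  define g0 where "g0 = (cmod T0)\<^sup>2"
  define A0 where "A0 = AA a 0"
  have choi: "choi_infidelity V (coherent a) = 1 - (1/4) * ((4*(1-p)\<^sup>2 + p\<^sup>2 * (1 + 2 * S2 a + (1 - E)) + 4*p*(1-p)*(2 * S1 a))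
     - R0\<^sup>2 + g0)"
    using choi_eq[OF U a] by (simp add: p_def R0_def g0_def T0_def E_def PP_0)
  have S1e: "S1 a = 1 - 1/(8*a\<^sup>2) - e1" by (simp add: e1_def)
  have S2e: "S2 a = 1 - 1/(2*a\<^sup>2) - e2" by (simp add: e2_def)
  have ident: "choi_infidelity V (coherent a) - p / (4 * a\<^sup>2) = p\<^sup>2*e2/2 + 2*p*(1-p)*e1 + p\<^sup>2*E/4 + (R0\<^sup>2 - g0)/4"
    unfolding choi S1e S2e by (rule ident_gen) (use a0 in simp)
  have pn: "(cmod (V 0 0))\<^sup>2 = 1 - p" using unitary_norms[OF U] by (simp add: p_def)
  have p0: "0 \<le> p" by (simp add: p_def)
  have p1: "p \<le> 1" using pn by (metis diff_ge_0_iff_ge zero_le_power2)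
  have E0: "E \<ge> 0" by (simp add: E_def)
  have e1b: "\<bar>e1\<bar> \<le> 2/a^4" using S1_bounds[OF a] by (simp add: e1_def abs_minus_commute)
  have e2b: "0 \<le> e2" "e2 \<le> 3/a^4 + E" using S2_bounds[OF a] by (simp_all add: e2_def E_def)
  have pp1: "p\<^sup>2 \<le> 1" using p0 p1 by (simp add: power_le_one)
  have t1: "0 \<le> p\<^sup>2*e2/2" "p\<^sup>2*e2/2 \<le> (3/a^4 + E)/2"
  proof -
    show "0 \<le> p\<^sup>2*e2/2" using e2b by simp
    have "p\<^sup>2*e2 \<le> e2" using mult_left_le_one_le[OF e2b(1) _ pp1] by simp
    then show "p\<^sup>2*e2/2 \<le> (3/a^4 + E)/2" using e2b by simp
  qed
  have t2: "\<bar>2*p*(1-p)*e1\<bar> \<le> 1/a^4"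
  proof -
    have q0: "0 \<le> 2*p*(1-p)" using p0 p1 by simp
    have q1: "2*p*(1-p) \<le> 1/2"
    proof -
      have "0 \<le> (2*p - 1)\<^sup>2" by simp
      then show ?thesis by (simp add: power2_eq_square algebra_simps)
    qed
    have "\<bar>2*p*(1-p)*e1\<bar> = 2*p*(1-p) * \<bar>e1\<bar>" by (simp only: abs_mult[of "2*p*(1-p)" e1] abs_of_nonneg[OF q0])
    also have "\<dots> \<le> (1/2) * (2/a^4)" by (rule mult_mono[OF q1 e1b]) simp_all
    finally show ?thesis by simp
  qed
  have t3: "0 \<le> p\<^sup>2*E/4" "p\<^sup>2*E/4 \<le> E/4"
  proof -
    show "0 \<le> p\<^sup>2*E/4" using E0 by simp
    have "p\<^sup>2*E \<le> E" using mult_left_le_one_le[OF E0 _ pp1] by simp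
    then show "p\<^sup>2*E/4 \<le> E/4" by simp
  qed
  have A00: "A0 \<ge> 0" using AA_nonneg[OF a0] by (simp add: A0_def)
  have A1: "AA a 1 = A0 * a" using AA_Suc[of a 0] by (simp add: A0_def)
  have A1s: "AA a (Suc 0) = AA a 0 * a" using AA_Suc[of a 0] by simp
  have A0sq: "A0\<^sup>2 = E" by (simp add: A0_def AA_sq PP_0 E_def)
  have B: "(A0 * (2 + a))\<^sup>2 = E * (2 + a)\<^sup>2" by (simp add: power_mult_distrib A0sq)
  have R0nn: "0 \<le> R0" "R0 \<le> A0 * (2 + a)"
  proof -
    have R0e: "R0 = 2*(1-p)*A0 + p*(A0*a)" by (simp add: R0_def RR_def BB_def A0_def A1s)
    have "0 \<le> A0*a" using A00 a0 by simp
    then have h1: "p*(A0*a) \<le> A0*a" using mult_left_le_one_le[of "A0*a" p] p0 p1 by simp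
    have h2: "(1-p)*A0 \<le> A0" using mult_left_le_one_le[OF A00, of "1-p"] p0 p1 by simp
    show "0 \<le> R0" unfolding R0e using p0 p1 A00 a0 by simp
    show "R0 \<le> A0 * (2 + a)" unfolding R0e using h1 h2 by (simp add: algebra_simps)
  qed
  have T0e: "T0 = cnj (V 0 0) * complex_of_real A0 + complex_of_real (p * (A0 * a) + (1 - p) * A0)"
    unfolding T0_def T_0[OF U] by (simp add: p_def A0_def A1s)
  have T0b: "cmod T0 \<le> A0 * (2 + a)"
  proof -
    have v: "cmod (V 0 0) \<le> 1"
    proof -
      have "(cmod (V 0 0))\<^sup>2 \<le> 1\<^sup>2" using pn p0 by simp
      then show ?thesis by (rule power2_le_imp_le) simp
    qed
    have "cmod T0 \<le> cmod (cnj (V 0 0) * complex_of_real A0) + cmod (complex_of_real (p * (A0 * a) + (1 - p) * A0))"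
      unfolding T0e by (rule norm_triangle_ineq)
    also have "cmod (cnj (V 0 0) * complex_of_real A0) = cmod (V 0 0) * A0"
      using A00 by (simp add: norm_mult)
    also have "cmod (complex_of_real (p * (A0 * a) + (1 - p) * A0)) = p * (A0 * a) + (1 - p) * A0"
    proof -
      have "0 \<le> p * (A0 * a) + (1 - p) * A0" using p0 p1 A00 a0 by simp
      then show ?thesis by (simp only: norm_of_real abs_of_nonneg)
    qed
    also have "cmod (V 0 0) * A0 \<le> A0" using mult_left_le_one_le[OF A00 _ v] by simp
    moreover have "p*(A0*a) \<le> A0*a" using mult_left_le_one_le[of "A0*a" p] p0 p1 A00 a0 by simp
    moreover have "(1-p)*A0 \<le> A0" using mult_left_le_one_le[OF A00, of "1-p"] p0 p1 by simp
    ultimately show ?thesis by (simp add: algebra_simps)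
  qed
  have t4: "\<bar>(R0\<^sup>2 - g0)/4\<bar> \<le> E * (2 + a)\<^sup>2 / 4"
  proof -
    have "R0\<^sup>2 \<le> (A0 * (2 + a))\<^sup>2" using R0nn by (intro power_mono) auto
    moreover have "g0 \<le> (A0 * (2 + a))\<^sup>2" unfolding g0_def using T0b by (intro power_mono) auto
    moreover have "0 \<le> g0" by (simp add: g0_def)
    moreover have "0 \<le> R0\<^sup>2" by simp
    ultimately have "R0\<^sup>2 - g0 \<le> E * (2 + a)\<^sup>2" "-(R0\<^sup>2 - g0) \<le> E * (2 + a)\<^sup>2"
      using B by linarith+
    then have "\<bar>R0\<^sup>2 - g0\<bar> \<le> E * (2 + a)\<^sup>2" using abs_le_iff by blast
    then show ?thesis by simp
  qed
  define u1 where "u1 = p\<^sup>2*e2/2"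
  define u2 where "u2 = 2*p*(1-p)*e1"
  define u3 where "u3 = p\<^sup>2*E/4"
  define u4 where "u4 = (R0\<^sup>2 - g0)/4"
  define q where "q = 1/a^4"
  define W where "W = E * (2 + a)\<^sup>2"
  have t1': "0 \<le> u1" "u1 \<le> (3/2)*q + E/2"
  proof -
    show "0 \<le> u1" using t1 by (simp add: u1_def)
    have "(3/a^4 + E)/2 = (3/2)*q + E/2" by (simp add: q_def)
    then show "u1 \<le> (3/2)*q + E/2" using t1 by (simp add: u1_def)
  qed
  have t2': "u2 \<le> q" "-u2 \<le> q" using abs_le_D1[OF t2] abs_le_D2[OF t2] by (simp_all add: u2_def q_def)
  have t3': "0 \<le> u3" "u3 \<le> E/4" using t3 by (simp_all add: u3_def)
  have t4': "u4 \<le> W/4" "-u4 \<le> W/4" using abs_le_D1[OF t4] abs_le_D2[OF t4] by (simp_all add: u4_def W_def)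
  have W0: "0 \<le> W" using E0 by (simp add: W_def)
  have q0: "0 \<le> q" by (simp add: q_def)
  have id2: "choi_infidelity V (coherent a) - p / (4 * a\<^sup>2) = u1 + u2 + u3 + u4"
    unfolding ident u1_def u2_def u3_def u4_def ..
  have "u1 + u2 + u3 + u4 \<le> 3*q + E + W" "-(u1 + u2 + u3 + u4) \<le> 3*q + E + W"
    using t1' t2' t3' t4' W0 q0 E0 by linarith+
  then have "\<bar>choi_infidelity V (coherent a) - p / (4 * a\<^sup>2)\<bar> \<le> 3*q + E + W"
    unfolding id2 using abs_le_iff by blast
  also have "3*q + E + W = 3/a^4 + E * (1 + (2+a)\<^sup>2)"
    by (simp add: q_def W_def algebra_simps)
  finally show ?thesis by (simp add: p_def E_def)
qed



lemma mean_energy_coherent: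
  assumes "\<omega> > 0"
  shows "mean_energy \<omega> (coherent a) = \<omega> * a\<^sup>2"
proof -
  have s: "(\<lambda>n. \<omega> * real n * (cmod (coherent a n))\<^sup>2) sums (\<omega> * a\<^sup>2)"
    using sums_mult[OF M1[of a], of \<omega>]
    by (rule sums_ext) (simp_all add: coherent_AA AA_sq mult_ac)
  have "((\<lambda>n. \<omega> * real n * (cmod (coherent a n))\<^sup>2) has_sum (\<omega> * a\<^sup>2)) UNIV"
    by (rule sums_nonneg_imp_has_sum[OF s]) (use assms in simp)
  then show ?thesis unfolding mean_energy_def by (rule infsumI)
qed

theorem mainTheorem9:
  fixes V :: "nat \<Rightarrow> nat \<Rightarrow> complex" and \<omega> :: real
  assumes "qubit_unitary V" and "\<omega> > 0"
  shows "(\<forall>\<alpha>>0. mean_energy \<omega> (coherent \<alpha>) = \<omega> * \<alpha>\<^sup>2)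
    \<and> (\<lambda>\<alpha>. choi_infidelity V (coherent \<alpha>) - (cmod (V 0 1))\<^sup>2 / (4 * \<alpha>\<^sup>2))
        \<in> o[at_top](\<lambda>\<alpha>. 1 / \<alpha>\<^sup>2)
    \<and> (\<lambda>\<alpha>. choi_infidelity V (coherent \<alpha>)
              - \<omega> * (cmod (V 0 1))\<^sup>2 / (4 * mean_energy \<omega> (coherent \<alpha>)))
        \<in> o[at_top](\<lambda>\<alpha>. 1 / mean_energy \<omega> (coherent \<alpha>))"
proof -
  define f where "f \<alpha> = choi_infidelity V (coherent \<alpha>) - (cmod (V 0 1))\<^sup>2 / (4 * \<alpha>\<^sup>2)" for \<alpha>
  define h :: "real \<Rightarrow> real" where "h a = 3/a^4 + exp (-(a\<^sup>2)) * (1 + (2+a)\<^sup>2)" for a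
  have c1: "\<forall>\<alpha>>0. mean_energy \<omega> (coherent \<alpha>) = \<omega> * \<alpha>\<^sup>2"
    using mean_energy_coherent[OF assms(2)] by blast
  have ho: "h \<in> o[at_top](\<lambda>\<alpha>. 1 / \<alpha>\<^sup>2)" unfolding h_def by real_asymp
  have "eventually (\<lambda>a. norm (f a) \<le> 1 * norm (h a)) at_top"
  proof -
    have "eventually (\<lambda>a::real. a \<ge> 1) at_top" by (rule eventually_ge_at_top)
    then show ?thesis
    proof (rule eventually_mono)
      fix a :: real assume a: "a \<ge> 1"
      have "0 \<le> h a" unfolding h_def by (intro add_nonneg_nonneg mult_nonneg_nonneg) simp_all
      then show "norm (f a) \<le> 1 * norm (h a)"
        using main_bound[OF assms(1) a] by (simp add: f_def h_def)
    qed
  qed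
  then have "f \<in> O[at_top](h)" by (rule bigoI)
  then have c2: "f \<in> o[at_top](\<lambda>\<alpha>. 1 / \<alpha>\<^sup>2)" using ho by (rule landau_o.big_small_trans)
  have ev: "eventually (\<lambda>\<alpha>::real. \<alpha> > 0) at_top" by (rule eventually_gt_at_top)
  have e1: "eventually (\<lambda>\<alpha>. choi_infidelity V (coherent \<alpha>)
              - \<omega> * (cmod (V 0 1))\<^sup>2 / (4 * mean_energy \<omega> (coherent \<alpha>)) = f \<alpha>) at_top"
    using ev by (rule eventually_mono) (use assms(2) in \<open>simp add: f_def mean_energy_coherent\<close>)
  have e2: "eventually (\<lambda>\<alpha>. 1 / mean_energy \<omega> (coherent \<alpha>) = inverse \<omega> * (1 / \<alpha>\<^sup>2)) at_top"
    using ev by (rule eventually_mono) (use assms(2) in \<open>simp add: mean_energy_coherent divide_inverse inverse_mult_distrib\<close>)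
  have "f \<in> o[at_top](\<lambda>\<alpha>. inverse \<omega> * (1 / \<alpha>\<^sup>2))"
  proof -
    have "o[at_top](\<lambda>\<alpha>. inverse \<omega> * (1 / \<alpha>\<^sup>2)) = o[at_top](\<lambda>\<alpha>::real. 1 / \<alpha>\<^sup>2)"
      by (rule landau_o.small.cmult) (use assms(2) in simp)
    then show ?thesis using c2 by simp
  qed
  then have c3: "(\<lambda>\<alpha>. choi_infidelity V (coherent \<alpha>)
              - \<omega> * (cmod (V 0 1))\<^sup>2 / (4 * mean_energy \<omega> (coherent \<alpha>)))
        \<in> o[at_top](\<lambda>\<alpha>. 1 / mean_energy \<omega> (coherent \<alpha>))"
    using landau_o.small.cong_ex[OF e1 e2] by simp
  show ?thesis using c1 c2 c3 unfolding f_def by blast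
qed

end
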